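(* Let $K$ be a number field and $C$ the correspondence $g(y)=f(x)$ with $f,g\in K[z]$, $\deg f=d>\deg g=e\ge1$. Let $P$ be a path of $C$ with entries in $\overline{K}$. Then $v\mapsto G_C(P,v)$ is a measurable function on $M_{\overline{K}}$, the limit $\hat h_C(P)=\lim_{n\to\infty}(e/d)^nh(\pi(\sigma^n(P)))$ exists, and \[\hat h_C(P)=\int_{M_{\overline{K}}}G_C(P,v)\,d\mu(v).\]
   Context: $C=\{(a,b)\in\overline{K}^2:g(b)=f(a)\}$. A path is $P=(x_n)_{n\ge0}$ with $(x_n,x_{n+1})\in C$; $\pi(P)=x_0$, $\sigma(P)=(x_{n+1})_n$. $G_C(P,v)=\lim_n(e/d)^n\log^+|\pi(\sigma^nP)|_v$. $h$ is the absolute logarithmic Weil height. $M_{\overline{K}}$ is the set of absolute values on $\overline{K}$ extending the (normalized) places of $K$, equipped with a $\sigma$-algebra and measure $\mu$ such that for every finite extension $L/K$ and place $w$ of $L$ the set of $v$ restricting to $w$ is measurable with measure $[L_w:K_w]/[L:K]$, and $h(\alpha)=\int\log^+|\alpha|_v\,d\mu(v)$ for all $\alpha\in\overline{K}$. *)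

theory Defs
  imports "HOL-Analysis.Analysis" "HOL-Computational_Algebra.Computational_Algebra"
    "HOL-Library.FuncSet"
begin

text \<open>Model: the algebraic closure of Q is realised as the set of algebraic complex
numbers; a number field K is a subfield of it of finite dimension over Q.\<close>

definition alg :: "complex set" where
  "alg = {z. algebraic z}"

definition subfield :: "complex set \<Rightarrow> bool" where
  "subfield S \<longleftrightarrow> 0 \<in> S \<and> 1 \<in> S \<and> (\<forall>x\<in>S. \<forall>y\<in>S. x + y \<in> S \<and> x * y \<in> S)
     \<and> (\<forall>x\<in>S. - x \<in> S \<and> inverse x \<in> S)"

definition number_field :: "complex set \<Rightarrow> bool" where
  "number_field K \<longleftrightarrow> subfield K \<and> K \<subseteq> alg \<and>
     (\<exists>B. finite B \<and> B \<subseteq> K \<and> K \<subseteq> {\<Sum>b\<in>B. of_rat (c b) * b | c. True})"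

text \<open>Field embeddings of L into the algebraic closure (extensional: 0 outside L);
their number is the absolute degree [L:Q].\<close>

definition emb :: "complex set \<Rightarrow> (complex \<Rightarrow> complex) set" where
  "emb L = {\<tau>. \<tau> 1 = 1 \<and> (\<forall>x\<in>L. \<forall>y\<in>L. \<tau> (x + y) = \<tau> x + \<tau> y \<and> \<tau> (x * y) = \<tau> x * \<tau> y)
              \<and> (\<forall>x. x \<notin> L \<longrightarrow> \<tau> x = 0)}"

definition deg :: "complex set \<Rightarrow> nat" where
  "deg L = card (emb L)"

text \<open>Standard absolute values of Q: p = 0 is the archimedean one, p prime the p-adic one
with |p|_p = 1/p.\<close>

definition absval_Q :: "nat \<Rightarrow> rat \<Rightarrow> real" where
  "absval_Q p q = (if p = 0 then \<bar>real_of_rat q\<bar> else if q = 0 then 0 else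
     (case quotient_of q of (a, b) \<Rightarrow>
        real p powr (real (multiplicity (int p) b) - real (multiplicity (int p) a))))"

definition std_absval :: "(complex \<Rightarrow> real) \<Rightarrow> bool" where
  "std_absval \<phi> \<longleftrightarrow>
     (\<forall>x\<in>alg. 0 \<le> \<phi> x \<and> (\<phi> x = 0 \<longleftrightarrow> x = 0)) \<and>
     (\<forall>x\<in>alg. \<forall>y\<in>alg. \<phi> (x * y) = \<phi> x * \<phi> y \<and> \<phi> (x + y) \<le> \<phi> x + \<phi> y) \<and>
     (\<forall>x. x \<notin> alg \<longrightarrow> \<phi> x = 0) \<and>
     (\<exists>p. (p = 0 \<or> prime p) \<and> (\<forall>q. \<phi> (of_rat q) = absval_Q p q))"

text \<open>Local degree [L_w : Q_p] of the place w of L induced by phi: the number of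
embeddings tau of L with phi o tau = phi on L.\<close>

definition ldeg :: "complex set \<Rightarrow> (complex \<Rightarrow> real) \<Rightarrow> nat" where
  "ldeg L \<phi> = card {\<tau> \<in> emb L. \<forall>x\<in>L. \<phi> (\<tau> x) = \<phi> x}"

definition norm_av :: "complex set \<Rightarrow> (complex \<Rightarrow> real) \<Rightarrow> complex \<Rightarrow> real" where
  "norm_av K \<phi> = (\<lambda>x. \<phi> x powr (real (ldeg K \<phi>) / real (deg K)))"

definition MKbar :: "complex set \<Rightarrow> (complex \<Rightarrow> real) set" where
  "MKbar K = norm_av K ` {\<phi>. std_absval \<phi>}"

definition logplus :: "real \<Rightarrow> real" where
  "logplus x = (if x \<le> 1 then 0 else ln x)"

definition gen_field :: "complex \<Rightarrow> complex set" where
  "gen_field \<alpha> = \<Inter>{S. subfield S \<and> \<alpha> \<in> S}"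

definition places :: "complex set \<Rightarrow> (complex \<Rightarrow> real) set" where
  "places L = (\<lambda>\<phi>. restrict \<phi> L) ` {\<phi>. std_absval \<phi>}"

definition place_ldeg :: "complex set \<Rightarrow> (complex \<Rightarrow> real) \<Rightarrow> nat" where
  "place_ldeg L w = ldeg L (SOME \<phi>. std_absval \<phi> \<and> restrict \<phi> L = w)"

definition weil_height :: "complex \<Rightarrow> real" where
  "weil_height \<alpha> = (let L = gen_field \<alpha> in
     (\<Sum>\<^sub>\<infinity>w\<in>places L. real (place_ldeg L w) * logplus (w \<alpha>)) / real (deg L))"

text \<open>Paths of the correspondence C : g(y) = f(x), i.e. g(x_{n+1}) = f(x_n);
pi (sigma^n P) = P n.\<close>

definition is_path :: "complex poly \<Rightarrow> complex poly \<Rightarrow> (nat \<Rightarrow> complex) \<Rightarrow> bool" where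
  "is_path f g P \<longleftrightarrow> (\<forall>n. poly g (P (Suc n)) = poly f (P n))"

definition shift :: "(nat \<Rightarrow> complex) \<Rightarrow> nat \<Rightarrow> complex" where
  "shift P = (\<lambda>n. P (Suc n))"

definition path_proj :: "(nat \<Rightarrow> complex) \<Rightarrow> complex" where
  "path_proj P = P 0"

definition GC :: "complex poly \<Rightarrow> complex poly \<Rightarrow> (nat \<Rightarrow> complex) \<Rightarrow> (complex \<Rightarrow> real) \<Rightarrow> real" where
  "GC f g P v = lim (\<lambda>n. (real (degree g) / real (degree f)) ^ n
                          * logplus (v (path_proj ((shift ^^ n) P))))"

end

theory Submission
  imports Defs
begin


interpretation Qv: vector_space "\<lambda>(q::rat) (x::complex). of_rat q * x"
  by unfold_locales (auto simp: algebra_simps of_rat_add of_rat_mult)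

section \<open>Subfields\<close>

lemma sf_0: "subfield L \<Longrightarrow> 0 \<in> L" and sf_1: "subfield L \<Longrightarrow> 1 \<in> L"
  and sf_add: "subfield L \<Longrightarrow> x \<in> L \<Longrightarrow> y \<in> L \<Longrightarrow> x + y \<in> L"
  and sf_mult: "subfield L \<Longrightarrow> x \<in> L \<Longrightarrow> y \<in> L \<Longrightarrow> x * y \<in> L"
  and sf_uminus: "subfield L \<Longrightarrow> x \<in> L \<Longrightarrow> - x \<in> L"
  and sf_inverse: "subfield L \<Longrightarrow> x \<in> L \<Longrightarrow> inverse x \<in> L"
  by (auto simp: subfield_def)

lemma sf_diff: "subfield L \<Longrightarrow> x \<in> L \<Longrightarrow> y \<in> L \<Longrightarrow> x - y \<in> L"
  using sf_add[of L x "-y"] sf_uminus[of L y] by simp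

lemma sf_divide: "subfield L \<Longrightarrow> x \<in> L \<Longrightarrow> y \<in> L \<Longrightarrow> x / y \<in> L"
  using sf_mult[of L x "inverse y"] sf_inverse[of L y] by (simp add: field_simps)

lemma sf_of_nat: "subfield L \<Longrightarrow> of_nat n \<in> L"
  by (induction n) (auto intro: sf_0 sf_1 sf_add)

lemma sf_of_int: "subfield L \<Longrightarrow> of_int n \<in> L"
proof (cases "n \<ge> 0")
  case True then show "subfield L \<Longrightarrow> of_int n \<in> L"
    using sf_of_nat[of L "nat n"] by simp
next
  case False then show "subfield L \<Longrightarrow> of_int n \<in> L"
    using sf_uminus[OF _ sf_of_nat[of L "nat (-n)"]] by simp
qed

lemma sf_of_rat: "subfield L \<Longrightarrow> of_rat q \<in> L"
proof -
  assume L: "subfield L"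
  obtain a b where ab: "quotient_of q = (a, b)" by (cases "quotient_of q")
  have "q = of_int a / of_int b" using quotient_of_div[OF ab] .
  then have "of_rat q = (of_int a / of_int b :: complex)" by (simp add: of_rat_divide)
  then show ?thesis using sf_divide[OF L sf_of_int[OF L] sf_of_int[OF L]] by simp
qed

lemma sf_power: "subfield L \<Longrightarrow> x \<in> L \<Longrightarrow> x ^ n \<in> L"
  by (induction n) (auto intro: sf_1 sf_mult)

lemma sf_sum: "subfield L \<Longrightarrow> (\<And>i. i \<in> I \<Longrightarrow> f i \<in> L) \<Longrightarrow> sum f I \<in> L"
  by (induction I rule: infinite_finite_induct) (auto intro: sf_0 sf_add)

lemma sf_poly: "subfield L \<Longrightarrow> (\<And>i. coeff p i \<in> L) \<Longrightarrow> x \<in> L \<Longrightarrow> poly p x \<in> L"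
  unfolding poly_altdef by (intro sf_sum) (auto intro: sf_mult sf_power)

lemma sf_subspace: "subfield L \<Longrightarrow> Qv.subspace L"
  by (auto simp: Qv.subspace_def intro: sf_0 sf_add sf_mult sf_of_rat)

lemma nf_span:
  assumes "number_field K"
  obtains B where "finite B" "B \<subseteq> K" "K = Qv.span B"
proof -
  from assms obtain B where B: "finite B" "B \<subseteq> K"
    "K \<subseteq> {\<Sum>b\<in>B. of_rat (c b) * b | c. True}"
    unfolding number_field_def by blast
  have "K \<subseteq> Qv.span B" using B by (auto simp: Qv.span_finite)
  moreover have "Qv.span B \<subseteq> K"
    using assms B(2) by (intro Qv.span_minimal sf_subspace) (auto simp: number_field_def)
  ultimately show ?thesis using that B by blast
qed

section \<open>Finite-dimensional spans closed under multiplication\<close>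

locale fdalg =
  fixes S :: "complex set"
  assumes fin: "finite S" and one: "1 \<in> Qv.span S"
    and mul: "\<And>x y. x \<in> Qv.span S \<Longrightarrow> y \<in> Qv.span S \<Longrightarrow> x * y \<in> Qv.span S"
begin

lemma pow: "x \<in> Qv.span S \<Longrightarrow> x ^ i \<in> Qv.span S"
  by (induction i) (auto intro: one mul)

lemma rat_in: "of_rat q * x \<in> Qv.span S" if "x \<in> Qv.span S"
  using Qv.span_scale[OF that] .

lemma polyint: "x \<in> Qv.span S \<Longrightarrow> poly (map_poly of_int q) x \<in> Qv.span S"
proof -
  assume x: "x \<in> Qv.span S"
  have "poly (map_poly of_int q) x = (\<Sum>i\<le>degree (map_poly of_int q :: complex poly).
      of_rat (of_int (coeff q i)) * x ^ i)"
    unfolding poly_altdef by (simp add: coeff_map_poly)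
  also have "\<dots> \<in> Qv.span S"
    by (intro Qv.span_sum rat_in pow x)
  finally show ?thesis .
qed

lemma algebraic: assumes x: "x \<in> Qv.span S" shows "algebraic x"
proof (cases "inj_on (\<lambda>i. x ^ i) {..card S}")
  case True
  define T where "T = (\<lambda>i. x ^ i) ` {..card S}"
  have cT: "card T = Suc (card S)" using True by (simp add: T_def card_image)
  have fT: "finite T" by (simp add: T_def)
  have TS: "T \<subseteq> Qv.span S" using pow[OF x] by (auto simp: T_def)
  have "\<not> Qv.independent T"
    using Qv.independent_span_bound[OF fin _ TS] cT by auto
  then obtain u where u: "\<exists>v\<in>T. u v \<noteq> 0" "(\<Sum>v\<in>T. of_rat (u v) * v) = 0"
    using Qv.dependent_finite[OF fT] by blast
  define p :: "complex poly" where "p = (\<Sum>i\<le>card S. monom (of_rat (u (x ^ i))) i)"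
  have cp: "coeff p j = (if j \<le> card S then of_rat (u (x ^ j)) else 0)" for j
    by (simp add: p_def coeff_sum coeff_monom)
  have "poly p x = (\<Sum>i\<le>card S. of_rat (u (x ^ i)) * x ^ i)"
    by (simp add: p_def poly_sum poly_monom)
  also have "\<dots> = (\<Sum>v\<in>T. of_rat (u v) * v)"
    unfolding T_def by (subst sum.reindex[OF True]) simp
  finally have px: "poly p x = 0" using u(2) by simp
  from u(1) obtain j where j: "j \<le> card S" "u (x ^ j) \<noteq> 0" by (auto simp: T_def)
  have "p \<noteq> 0"
  proof
    assume "p = 0"
    then have "coeff p j = 0" by simp
    with j cp show False by simp
  qed
  moreover have "coeff p i \<in> \<rat>" for i by (simp add: cp)
  ultimately show ?thesis using px by (intro algebraicI') auto
next
  case False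
  then obtain i j where ij: "i \<le> card S" "j \<le> card S" "i \<noteq> j" "x ^ i = x ^ j"
    unfolding inj_on_def by auto
  define p :: "complex poly" where "p = monom 1 i - monom 1 j"
  have "coeff p i = 1" using ij by (simp add: p_def coeff_monom)
  then have "p \<noteq> 0" by auto
  moreover have "coeff p k \<in> \<rat>" for k by (simp add: p_def coeff_monom)
  moreover have "poly p x = 0" using ij by (simp add: p_def poly_monom)
  ultimately show ?thesis by (intro algebraicI') auto
qed

lemma inverse: assumes x: "x \<in> Qv.span S" shows "inverse x \<in> Qv.span S"
proof (cases "x = 0")
  case True then show ?thesis by (simp add: Qv.span_zero)
next
  case False
  obtain p where p: "p \<noteq> 0" "coeff p 0 \<noteq> 0" "poly (map_poly of_int p) x = 0"
    using algebraicE'_nonzero[OF algebraic[OF x] False] by blast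
  obtain c q where pq: "p = pCons c q" by (cases p)
  have c: "c \<noteq> 0" using p(2) pq by simp
  have "of_int c + x * poly (map_poly of_int q) x = 0"
    using p(3) unfolding pq by (simp add: map_poly_pCons)
  then have "x * poly (map_poly of_int q) x = - of_int c"
    by (simp add: add_eq_0_iff algebra_simps)
  then have Q: "poly (map_poly of_int q) x = - of_int c / x"
    using False by (simp add: field_simps)
  have r: "(of_rat (- 1 / of_int c) :: complex) = - 1 / of_int c"
    by (simp add: of_rat_divide of_rat_minus)
  have "inverse x = of_rat (- 1 / of_int c) * poly (map_poly of_int q) x"
    unfolding Q r using False c by (simp add: field_simps)
  also have "\<dots> \<in> Qv.span S" by (intro rat_in polyint x)
  finally show ?thesis .
qed

end


lemma span_mult_closed:
  assumes "\<And>s t. s \<in> S \<Longrightarrow> t \<in> S \<Longrightarrow> s * t \<in> Qv.span S"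
    and "x \<in> Qv.span S" "y \<in> Qv.span S"
  shows "x * y \<in> Qv.span S"
proof -
  have A: "s * y \<in> Qv.span S" if s: "s \<in> S" and y: "y \<in> Qv.span S" for s y
  proof -
    have "Qv.subspace {y. s * y \<in> Qv.span S}"
      unfolding Qv.subspace_def
      by (auto simp: distrib_left mult.left_commute[of s] intro: Qv.span_zero Qv.span_add Qv.span_scale)
    then show ?thesis using Qv.span_induct[OF y, of "\<lambda>y. s * y \<in> Qv.span S"] assms(1) s by blast
  qed
  have "Qv.subspace {x. x * y \<in> Qv.span S}"
    unfolding Qv.subspace_def
    by (auto simp: distrib_right mult.assoc intro: Qv.span_zero Qv.span_add Qv.span_scale)
  then show ?thesis using Qv.span_induct[OF assms(2), of "\<lambda>x. x * y \<in> Qv.span S"] A assms(3) by blast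
qed

lemma extend_nf:
  assumes K: "number_field K" and a: "\<alpha> \<in> alg"
  shows "\<exists>L. number_field L \<and> K \<subseteq> L \<and> \<alpha> \<in> L"
proof -
  obtain B where B: "finite B" "B \<subseteq> K" "K = Qv.span B" using nf_span[OF K] by blast
  have sfK: "subfield K" using K by (simp add: number_field_def)
  obtain p where p: "p \<noteq> 0" "poly (map_poly of_int p) \<alpha> = 0"
    using algebraicE'[of \<alpha>] a by (auto simp: alg_def)
  define P :: "complex poly" where "P = map_poly of_int p"
  define m where "m = degree P"
  have P0: "P \<noteq> 0"
  proof
    assume "P = 0"
    have "coeff P i = of_int (coeff p i)" for i by (simp add: P_def coeff_map_poly)
    then have "coeff p i = 0" for i using \<open>P = 0\<close> by (metis coeff_0 of_int_eq_0_iff)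
    with p(1) show False by (simp add: poly_eq_iff)
  qed
  have Pa: "poly P \<alpha> = 0" using p(2) by (simp add: P_def)
  have lc: "coeff P m \<noteq> 0" using P0 by (simp add: m_def)
  have m1: "m \<ge> 1"
  proof (rule ccontr)
    assume "\<not> m \<ge> 1"
    then have "m = 0" by simp
    then have "degree P = 0" by (simp add: m_def)
    then obtain c where "P = [:c:]" using degree0_coeffs by blast
    then have "poly P \<alpha> = coeff P 0" by simp
    with Pa lc \<open>m = 0\<close> show False by simp
  qed
  have cP: "coeff P i = of_rat (of_int (coeff p i))" for i by (simp add: P_def coeff_map_poly)
  define S where "S = (\<lambda>(b, i). b * \<alpha> ^ i) ` (B \<times> {..<m})"
  define V where "V = Qv.span S"
  have finS: "finite S" using B(1) by (simp add: S_def)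
  have claim: "y * \<alpha> ^ k \<in> V" if "y \<in> K" for k y
    using that
  proof (induction k arbitrary: y rule: less_induct)
    case (less k)
    show ?case
    proof (cases "k < m")
      case True
      from less.prems B(3) obtain u where u: "y = (\<Sum>b\<in>B. of_rat (u b) * b)"
        using Qv.span_finite[OF B(1)] by auto
      have "y * \<alpha> ^ k = (\<Sum>b\<in>B. of_rat (u b) * (b * \<alpha> ^ k))"
        unfolding u by (subst sum_distrib_right) (simp add: mult_ac)
      also have "\<dots> \<in> V" unfolding V_def
        by (intro Qv.span_sum Qv.span_scale Qv.span_base) (use True in \<open>auto simp: S_def\<close>)
      finally show ?thesis .
    next
      case False
      have "(\<Sum>i\<le>m. coeff P i * \<alpha> ^ i) = 0" using Pa by (simp add: poly_altdef m_def)
      then have "(\<Sum>i<m. coeff P i * \<alpha> ^ i) + coeff P m * \<alpha> ^ m = 0"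
        by (simp add: lessThan_Suc_atMost[symmetric])
      then have "coeff P m * \<alpha> ^ m = - (\<Sum>i<m. coeff P i * \<alpha> ^ i)"
        by (subst eq_neg_iff_add_eq_0) (simp add: add.commute)
      then have am: "\<alpha> ^ m = - (\<Sum>i<m. coeff P i * \<alpha> ^ i) / coeff P m"
        using lc by (metis nonzero_mult_div_cancel_left)
      obtain j where kj: "k = j + m" using False by (metis add.commute le_add_diff_inverse not_less)
      have "y * \<alpha> ^ k = y * \<alpha> ^ (k - m) * \<alpha> ^ m"
        unfolding kj by (simp add: power_add)
      also have "\<dots> = (\<Sum>i<m. of_rat (- (of_int (coeff p i) / of_int (coeff p m)))
                          * (y * \<alpha> ^ (k - m + i)))"
      proof -
        define z where "z = y * \<alpha> ^ (k - m)"
        have r: "(of_rat (- (of_int (coeff p i) / of_int (coeff p m))) :: complex)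
                 = - (coeff P i / coeff P m)" for i
          by (simp add: P_def coeff_map_poly of_rat_divide of_rat_minus)
        have "z * (- (\<Sum>i<m. coeff P i * \<alpha> ^ i) / coeff P m)
            = - ((\<Sum>i<m. z * (coeff P i * \<alpha> ^ i)) / coeff P m)"
          by (simp add: sum_distrib_left)
        also have "\<dots> = (\<Sum>i<m. - (z * (coeff P i * \<alpha> ^ i) / coeff P m))"
          by (simp add: sum_divide_distrib sum_negf)
        also have "\<dots> = (\<Sum>i<m. - (coeff P i / coeff P m) * (z * \<alpha> ^ i))"
          by (intro sum.cong refl) simp
        finally show ?thesis unfolding am r z_def by (simp add: power_add mult.assoc)
      qed
      also have "\<dots> \<in> V" unfolding V_def
        by (intro Qv.span_sum Qv.span_scale less.IH[unfolded V_def] less.prems) (use False in auto)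
      finally show ?thesis .
    qed
  qed
  have mulS: "s * t \<in> Qv.span S" if "s \<in> S" "t \<in> S" for s t
  proof -
    from that obtain b i b' j where st: "b \<in> B" "b' \<in> B" "s = b * \<alpha> ^ i" "t = b' * \<alpha> ^ j"
      by (auto simp: S_def)
    have "s * t = (b * b') * \<alpha> ^ (i + j)" by (simp add: st power_add algebra_simps)
    also have "\<dots> \<in> V" using st B(2) by (intro claim sf_mult[OF sfK]) auto
    finally show ?thesis by (simp add: V_def)
  qed
  have mulV: "x * y \<in> V" if "x \<in> V" "y \<in> V" for x y
    using span_mult_closed[OF mulS] that by (simp add: V_def)
  have oneV: "1 \<in> V" using claim[of 1 0] sf_1[OF sfK] by simp
  interpret fd: fdalg S using finS oneV mulV by unfold_locales (auto simp: V_def)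
  have "subfield V"
    unfolding subfield_def using mulV oneV fd.inverse
    by (auto simp: V_def intro: Qv.span_zero Qv.span_add Qv.span_neg)
  moreover have "V \<subseteq> alg" using fd.algebraic by (auto simp: alg_def V_def)
  moreover have "V \<subseteq> {\<Sum>b\<in>S. of_rat (c b) * b | c. True}"
    using Qv.span_finite[OF finS] by (auto simp: V_def)
  moreover have "S \<subseteq> V" by (simp add: V_def Qv.span_superset)
  ultimately have "number_field V" using finS unfolding number_field_def by blast
  moreover have "K \<subseteq> V" using claim[of _ 0] by auto
  moreover have "\<alpha> \<in> V" using claim[of 1 1] sf_1[OF sfK] by simp
  ultimately show ?thesis by blast
qed


lemma map_poly_of_int_nz: "p \<noteq> 0 \<Longrightarrow> (map_poly of_int p :: complex poly) \<noteq> 0"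
proof
  assume p: "p \<noteq> 0" and P: "(map_poly of_int p :: complex poly) = 0"
  have "coeff (map_poly of_int p :: complex poly) i = of_int (coeff p i)" for i by (simp add: coeff_map_poly)
  then have "coeff p i = 0" for i using P by (metis coeff_0 of_int_eq_0_iff)
  with p show False by (simp add: poly_eq_iff)
qed

context
  fixes L \<tau> assumes L: "subfield L" and \<tau>: "\<tau> \<in> emb L"
begin

lemma emb_add: "x \<in> L \<Longrightarrow> y \<in> L \<Longrightarrow> \<tau> (x + y) = \<tau> x + \<tau> y"
  and emb_mult: "x \<in> L \<Longrightarrow> y \<in> L \<Longrightarrow> \<tau> (x * y) = \<tau> x * \<tau> y"
  and emb_1: "\<tau> 1 = 1" and emb_out: "x \<notin> L \<Longrightarrow> \<tau> x = 0"
  using \<tau> by (auto simp: emb_def)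

lemma emb_0: "\<tau> 0 = 0"
  using emb_add[OF sf_0[OF L] sf_0[OF L]] by simp

lemma emb_uminus: "x \<in> L \<Longrightarrow> \<tau> (- x) = - \<tau> x"
proof -
  assume x: "x \<in> L"
  have "\<tau> x + \<tau> (- x) = 0" using emb_add[OF x sf_uminus[OF L x]] emb_0 by simp
  then show ?thesis by (metis add.commute eq_neg_iff_add_eq_0)
qed

lemma emb_of_nat: "\<tau> (of_nat n) = of_nat n"
proof (induction n)
  case 0 then show ?case by (simp add: emb_0)
next
  case (Suc n)
  have "\<tau> (of_nat (Suc n)) = \<tau> (of_nat n + 1)" by (simp add: add.commute)
  also have "\<dots> = \<tau> (of_nat n) + \<tau> 1" by (rule emb_add[OF sf_of_nat[OF L] sf_1[OF L]])
  also have "\<dots> = of_nat (Suc n)" using Suc.IH emb_1 by simp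
  finally show ?case .
qed

lemma emb_of_int: "\<tau> (of_int n) = of_int n"
proof (cases "n \<ge> 0")
  case True then show ?thesis using emb_of_nat[of "nat n"] by simp
next
  case False
  then have e: "of_int n = - (of_nat (nat (- n)) :: complex)" by simp
  show ?thesis unfolding e by (simp only: emb_uminus[OF sf_of_nat[OF L]] emb_of_nat)
qed

lemma emb_of_rat: "\<tau> (of_rat r) = of_rat r"
proof -
  obtain a b where ab: "quotient_of r = (a, b)" by (cases "quotient_of r")
  have b: "b > 0" using quotient_of_denom_pos[OF ab] .
  have r: "(of_rat r :: complex) = of_int a / of_int b"
    using quotient_of_div[OF ab] by (simp add: of_rat_divide)
  have "of_int a = (of_rat r :: complex) * of_int b" using b by (simp add: r)
  then have "\<tau> (of_int a) = \<tau> (of_rat r) * \<tau> (of_int b)"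
    using emb_mult[OF sf_of_rat[OF L] sf_of_int[OF L]] by simp
  then have "of_int a = \<tau> (of_rat r) * of_int b" by (simp add: emb_of_int)
  then show ?thesis using b by (simp add: r field_simps)
qed

lemma emb_sum: "(\<And>i. i \<in> I \<Longrightarrow> f i \<in> L) \<Longrightarrow> \<tau> (sum f I) = (\<Sum>i\<in>I. \<tau> (f i))"
  by (induction I rule: infinite_finite_induct) (auto simp: emb_0 emb_add sf_sum[OF L])

lemma emb_poly_int: "b \<in> L \<Longrightarrow> \<tau> (poly (map_poly of_int p) b) = poly (map_poly of_int p) (\<tau> b)"
proof (induction p)
  case 0 then show ?case by (simp add: emb_0)
next
  case (pCons a p)
  have inL: "poly (map_poly of_int p) b \<in> L"
    using pCons.prems by (intro sf_poly[OF L]) (auto simp: coeff_map_poly sf_of_int[OF L])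
  show ?case using pCons inL
    by (simp add: map_poly_pCons emb_add emb_mult sf_mult[OF L] sf_of_int[OF L] emb_of_int)
qed

lemma emb_lincomb:
  assumes "B \<subseteq> L"
  shows "\<tau> (\<Sum>b\<in>B. of_rat (u b) * b) = (\<Sum>b\<in>B. of_rat (u b) * \<tau> b)"
proof -
  have inL: "of_rat (u b) * b \<in> L" if "b \<in> B" for b
    using assms that by (auto intro: sf_mult[OF L] sf_of_rat[OF L])
  have "\<tau> (\<Sum>b\<in>B. of_rat (u b) * b) = (\<Sum>b\<in>B. \<tau> (of_rat (u b) * b))"
    by (rule emb_sum[OF inL])
  also have "\<dots> = (\<Sum>b\<in>B. of_rat (u b) * \<tau> b)"
  proof (intro sum.cong refl)
    fix b assume b: "b \<in> B"
    have "\<tau> (of_rat (u b) * b) = \<tau> (of_rat (u b)) * \<tau> b"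
      using assms b by (intro emb_mult sf_of_rat[OF L]) auto
    then show "\<tau> (of_rat (u b) * b) = of_rat (u b) * \<tau> b" by (simp only: emb_of_rat)
  qed
  finally show ?thesis .
qed

end

lemma id_emb: "subfield L \<Longrightarrow> (\<lambda>x. if x \<in> L then x else 0) \<in> emb L"
  by (auto simp: emb_def sf_1 sf_add sf_mult)

lemma finite_emb:
  assumes L: "number_field L" shows "finite (emb L)"
proof -
  have sfL: "subfield L" and La: "L \<subseteq> alg" using L by (auto simp: number_field_def)
  obtain B where B: "finite B" "B \<subseteq> L" "L = Qv.span B" using nf_span[OF L] by blast
  have "\<forall>b\<in>B. \<exists>p. p \<noteq> 0 \<and> poly (map_poly of_int p) b = (0::complex)"
  proof
    fix b assume "b \<in> B"
    then have "algebraic b" using B(2) La by (auto simp: alg_def)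
    then obtain p where "p \<noteq> 0" "poly (map_poly of_int p) b = 0" by (rule algebraicE')
    then show "\<exists>p. p \<noteq> 0 \<and> poly (map_poly of_int p) b = (0::complex)" by blast
  qed
  from bchoice[OF this] obtain pp where
    pp': "\<forall>b\<in>B. pp b \<noteq> 0 \<and> poly (map_poly of_int (pp b)) b = (0::complex)" by blast
  then have pp: "\<And>b. b \<in> B \<Longrightarrow> pp b \<noteq> 0 \<and> poly (map_poly of_int (pp b)) b = (0::complex)"
    by blast
  define R where "R b = {z. poly (map_poly of_int (pp b) :: complex poly) z = 0}" for b
  have finR: "finite (R b)" if "b \<in> B" for b
    unfolding R_def using pp[OF that] by (intro poly_roots_finite map_poly_of_int_nz) auto
  have img: "(\<lambda>\<tau>. restrict \<tau> B) ` emb L \<subseteq> PiE B R"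
  proof
    fix r assume "r \<in> (\<lambda>\<tau>. restrict \<tau> B) ` emb L"
    then obtain \<tau> where \<tau>: "\<tau> \<in> emb L" "r = restrict \<tau> B" by blast
    have "\<tau> b \<in> R b" if "b \<in> B" for b
      using emb_poly_int[OF sfL \<tau>(1), of b "pp b"] pp[OF that] B(2) that emb_0[OF sfL \<tau>(1)]
      by (auto simp: R_def)
    then show "r \<in> PiE B R" using \<tau>(2) by auto
  qed
  have inj: "inj_on (\<lambda>\<tau>. restrict \<tau> B) (emb L)"
  proof
    fix \<tau> \<sigma> assume \<tau>: "\<tau> \<in> emb L" and \<sigma>: "\<sigma> \<in> emb L" and eq: "restrict \<tau> B = restrict \<sigma> B"
    have eqB: "\<tau> b = \<sigma> b" if "b \<in> B" for b using fun_cong[OF eq, of b] that by simp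
    show "\<tau> = \<sigma>"
    proof
      fix x show "\<tau> x = \<sigma> x"
      proof (cases "x \<in> L")
        case True
        then obtain u where u: "x = (\<Sum>b\<in>B. of_rat (u b) * b)"
          using B(3) Qv.span_finite[OF B(1)] by auto
        have "\<tau> x = (\<Sum>b\<in>B. of_rat (u b) * \<tau> b)"
          unfolding u by (rule emb_lincomb[OF sfL \<tau> B(2)])
        also have "\<dots> = (\<Sum>b\<in>B. of_rat (u b) * \<sigma> b)" using eqB by simp
        also have "\<dots> = \<sigma> x"
          unfolding u by (rule emb_lincomb[OF sfL \<sigma> B(2), symmetric])
        finally show ?thesis .
      next
        case False then show ?thesis using emb_out[OF sfL \<tau>] emb_out[OF sfL \<sigma>] by simp
      qed
    qed
  qed
  show ?thesis by (intro inj_on_finite[OF inj img] finite_PiE B(1) finR)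
qed

lemma ldeg_ge1:
  assumes L: "number_field L" and "\<And>x. x \<in> L \<Longrightarrow> \<phi> x = \<phi> x"
  shows "ldeg L \<phi> \<ge> 1"
proof -
  have sfL: "subfield L" using L by (simp add: number_field_def)
  have "(\<lambda>x. if x \<in> L then x else 0) \<in> {\<tau> \<in> emb L. \<forall>x\<in>L. \<phi> (\<tau> x) = \<phi> x}"
    using id_emb[OF sfL] by auto
  moreover have "finite {\<tau> \<in> emb L. \<forall>x\<in>L. \<phi> (\<tau> x) = \<phi> x}" using finite_emb[OF L] by simp
  ultimately have "card {\<tau> \<in> emb L. \<forall>x\<in>L. \<phi> (\<tau> x) = \<phi> x} > 0"
    by (subst card_gt_0_iff) blast
  then show ?thesis unfolding ldeg_def by simp
qed

lemma ldeg_le_deg: "number_field L \<Longrightarrow> ldeg L \<phi> \<le> deg L"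
  unfolding ldeg_def deg_def by (intro card_mono finite_emb) auto

lemma deg_ge1: "number_field L \<Longrightarrow> deg L \<ge> 1"
  using ldeg_ge1[of L \<phi>] ldeg_le_deg[of L \<phi>] by simp


lemma logplus_eq: "logplus t = ln (max 1 t)"
  by (simp add: logplus_def max_def)

lemma logplus_nonneg: "logplus t \<ge> 0"
  by (simp add: logplus_def)

lemma absval_Q_zero: "absval_Q p 0 = 0"
  by (simp add: absval_Q_def)

lemma absval_Q_arch: "absval_Q 0 q = \<bar>real_of_rat q\<bar>"
  by (simp add: absval_Q_def)

lemma absval_Q_nat_le1:
  assumes "prime p" shows "absval_Q p (of_nat n) \<le> 1"
proof (cases "n = 0")
  case True then show ?thesis by (simp add: absval_Q_def)
next
  case False
  have p: "p \<noteq> 0" using assms by auto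
  have "absval_Q p (of_nat n) = real p powr (- real (multiplicity (int p) (int n)))"
    using p False by (simp add: absval_Q_def)
  also have "\<dots> = inverse (real p powr real (multiplicity (int p) (int n)))"
    by (simp add: powr_minus)
  also have "\<dots> \<le> 1"
  proof -
    have "1 \<le> real p powr real (multiplicity (int p) (int n))"
      using p by (intro ge_one_powr_ge_zero) auto
    then show ?thesis by (simp add: inverse_le_1_iff)
  qed
  finally show ?thesis .
qed

lemma absval_Q_self:
  assumes "prime p" shows "absval_Q p (of_nat p) = inverse (real p)"
proof -
  have p: "p \<noteq> 0" using assms by auto
  have m: "multiplicity (int p) (int p) = 1"
    using assms by (intro multiplicity_self) (auto simp: prime_gt_1_nat)
  have "absval_Q p (of_nat p) = real p powr (- 1)"
    using p m by (simp add: absval_Q_def)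
  then show ?thesis by (simp add: powr_minus)
qed

lemma std_nonneg: "std_absval \<phi> \<Longrightarrow> \<phi> x \<ge> 0"
  unfolding std_absval_def by (cases "x \<in> alg") auto

lemma prod_ge_factor:
  fixes f :: "'a \<Rightarrow> real"
  assumes "finite I" "i \<in> I" "\<And>j. j \<in> I \<Longrightarrow> f j \<ge> 1"
  shows "f i \<le> prod f I"
proof -
  have "prod f I = f i * prod f (I - {i})" using assms by (simp add: prod.remove)
  moreover have "prod f (I - {i}) \<ge> 1" using assms by (intro prod_ge_1) auto
  moreover have "f i \<ge> 0" using assms(3)[OF assms(2)] by linarith
  ultimately show ?thesis using mult_left_mono[of 1 "prod f (I - {i})" "f i"] by simp
qed

locale avL =
  fixes \<phi> :: "complex \<Rightarrow> real" and L :: "complex set"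
  assumes std: "std_absval \<phi>" and sf: "subfield L" and La: "L \<subseteq> alg"
begin

lemma nonneg: "\<phi> x \<ge> 0" using std_nonneg[OF std] .

lemma mult: "x \<in> L \<Longrightarrow> y \<in> L \<Longrightarrow> \<phi> (x * y) = \<phi> x * \<phi> y"
  and tri: "x \<in> L \<Longrightarrow> y \<in> L \<Longrightarrow> \<phi> (x + y) \<le> \<phi> x + \<phi> y"
  and zero_iff: "x \<in> L \<Longrightarrow> \<phi> x = 0 \<longleftrightarrow> x = 0"
  using std La unfolding std_absval_def by blast+

lemma prime_of: obtains p where "p = 0 \<or> prime p" "\<And>q. \<phi> (of_rat q) = absval_Q p q"
  using std unfolding std_absval_def by blast

lemma zero: "\<phi> 0 = 0" using zero_iff[OF sf_0[OF sf]] by simp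

lemma one: "\<phi> 1 = 1"
proof -
  obtain p where p: "p = 0 \<or> prime p" "\<And>q. \<phi> (of_rat q) = absval_Q p q"
    using std unfolding std_absval_def by blast
  have "\<phi> 1 = absval_Q p 1" using p(2)[of 1] by simp
  also have "\<dots> = 1" using p(1) by (auto simp: absval_Q_def)
  finally show ?thesis .
qed

lemma power: "x \<in> L \<Longrightarrow> \<phi> (x ^ n) = \<phi> x ^ n"
  by (induction n) (simp_all add: one mult sf_power[OF sf])

lemma inverse: "x \<in> L \<Longrightarrow> \<phi> (inverse x) = inverse (\<phi> x)"
proof (cases "x = 0")
  case True then show ?thesis by (simp add: zero)
next
  case False
  assume x: "x \<in> L"
  have "\<phi> x * \<phi> (inverse x) = 1"
    using mult[OF x sf_inverse[OF sf x]] False one by simp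
  from inverse_unique[OF this] show ?thesis by simp
qed

lemma sum_le: "(\<And>i. i \<in> I \<Longrightarrow> f i \<in> L) \<Longrightarrow> \<phi> (sum f I) \<le> (\<Sum>i\<in>I. \<phi> (f i))"
proof (induction I rule: infinite_finite_induct)
  case (infinite A) then show ?case by (simp add: zero)
next
  case empty then show ?case by (simp add: zero)
next
  case (insert i I)
  have "\<phi> (sum f (insert i I)) = \<phi> (f i + sum f I)" using insert by simp
  also have "\<dots> \<le> \<phi> (f i) + \<phi> (sum f I)"
    using insert.prems by (intro tri sf_sum[OF sf]) auto
  also have "\<dots> \<le> \<phi> (f i) + (\<Sum>j\<in>I. \<phi> (f j))" using insert by auto
  finally show ?case using insert by simp
qed

lemma ultra:
  assumes p: "prime p" "\<And>q. \<phi> (of_rat q) = absval_Q p q"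
    and x: "x \<in> L" and y: "y \<in> L"
  shows "\<phi> (x + y) \<le> max (\<phi> x) (\<phi> y)"
proof (rule ccontr)
  define M where "M = max (\<phi> x) (\<phi> y)"
  define t where "t = \<phi> (x + y)"
  assume "\<not> \<phi> (x + y) \<le> max (\<phi> x) (\<phi> y)"
  then have tM: "t > M" unfolding M_def t_def by linarith
  have M0: "M \<ge> 0" by (simp add: M_def le_max_iff_disj nonneg)
  have c1: "\<phi> (of_nat k) \<le> 1" for k
    using p(2)[of "of_nat k"] absval_Q_nat_le1[OF p(1)] by simp
  have key: "t ^ N \<le> real (Suc N) * M ^ N" for N
  proof -
    have inL: "of_nat (N choose k) * x ^ k * y ^ (N - k) \<in> L" for k
      by (intro sf_mult sf_of_nat sf_power sf x y)
    have "t ^ N = \<phi> ((x + y) ^ N)" by (simp add: t_def power sf_add[OF sf x y])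
    also have "\<dots> = \<phi> (\<Sum>k\<le>N. of_nat (N choose k) * x ^ k * y ^ (N - k))"
      by (simp add: binomial_ring)
    also have "\<dots> \<le> (\<Sum>k\<le>N. \<phi> (of_nat (N choose k) * x ^ k * y ^ (N - k)))"
      by (intro sum_le inL)
    also have "\<dots> \<le> (\<Sum>k\<le>N. M ^ N)"
    proof (intro sum_mono)
      fix k assume k: "k \<in> {..N}"
      have "\<phi> (of_nat (N choose k) * x ^ k * y ^ (N - k))
          = \<phi> (of_nat (N choose k)) * \<phi> x ^ k * \<phi> y ^ (N - k)"
        by (simp add: mult power sf_mult[OF sf] sf_of_nat[OF sf] sf_power[OF sf] x y)
      also have "\<dots> \<le> 1 * M ^ k * M ^ (N - k)"
        by (intro mult_mono power_mono c1 zero_le_power) (auto simp: M_def nonneg le_max_iff_disj)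
      also have "\<dots> = M ^ N"
      proof -
        have "M ^ k * M ^ (N - k) = M ^ (k + (N - k))" by (rule power_add[symmetric])
        then show ?thesis using k by simp
      qed
      finally show "\<phi> (of_nat (N choose k) * x ^ k * y ^ (N - k)) \<le> M ^ N" .
    qed
    also have "\<dots> = real (Suc N) * M ^ N" by simp
    finally show ?thesis .
  qed
  define q where "q = M / t"
  have t0: "t > 0" using tM M0 by simp
  have q0: "q \<ge> 0" "q < 1" using tM M0 t0 by (auto simp: q_def field_simps)
  have ge: "1 \<le> real N * q ^ N + q ^ N" for N
  proof -
    have "t ^ N \<le> real (Suc N) * M ^ N" by (rule key)
    then have "1 \<le> real (Suc N) * M ^ N / t ^ N" using t0 by (simp add: field_simps)
    also have "\<dots> = real N * q ^ N + q ^ N" by (simp add: q_def power_divide add_divide_distrib algebra_simps)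
    finally show ?thesis .
  qed
  have "(\<lambda>N. real N * q ^ N + q ^ N) \<longlonglongrightarrow> 0 + 0"
    using q0 by (intro tendsto_add powser_times_n_limit_0 LIMSEQ_power_zero) auto
  then have "1 \<le> (0::real)" using ge by (intro LIMSEQ_le_const[of _ 0]) auto
  then show False by simp
qed

lemma sum_bound:
  assumes f: "\<And>i. i \<in> I \<Longrightarrow> f i \<in> L" and B: "\<And>i. i \<in> I \<Longrightarrow> \<phi> (f i) \<le> B" and B0: "B \<ge> 0"
  shows "\<phi> (sum f I) \<le> max 1 (\<phi> (of_nat (card I))) * B"
proof -
  obtain p where p: "p = 0 \<or> prime p" "\<And>q. \<phi> (of_rat q) = absval_Q p q"
    using std unfolding std_absval_def by blast
  show ?thesis
  proof (cases "p = 0")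
    case True
    have "\<phi> (of_nat (card I)) = real (card I)"
      using p(2)[of "of_nat (card I)"] True by (simp add: absval_Q_arch)
    moreover have "\<phi> (sum f I) \<le> real (card I) * B"
    proof -
      have "\<phi> (sum f I) \<le> (\<Sum>i\<in>I. \<phi> (f i))" using sum_le f by blast
      also have "\<dots> \<le> (\<Sum>i\<in>I. B)" using B by (intro sum_mono) auto
      also have "\<dots> = real (card I) * B" by simp
      finally show ?thesis .
    qed
    moreover have "real (card I) * B \<le> max 1 (real (card I)) * B"
      using B0 by (intro mult_right_mono) auto
    ultimately show ?thesis by simp
  next
    case False
    with p have pr: "prime p" by auto
    have "\<phi> (sum f I) \<le> B" using f B
    proof (induction I rule: infinite_finite_induct)
      case (infinite A) then show ?case using B0 by (simp add: zero)
    next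
      case empty then show ?case using B0 by (simp add: zero)
    next
      case (insert i I)
      have "\<phi> (sum f (insert i I)) = \<phi> (f i + sum f I)" using insert by simp
      also have "\<dots> \<le> max (\<phi> (f i)) (\<phi> (sum f I))"
        using insert.prems by (intro ultra[OF pr p(2)] sf_sum[OF sf]) auto
      also have "\<dots> \<le> B" using insert by auto
      finally show ?case .
    qed
    moreover have "1 * B \<le> max 1 (\<phi> (of_nat (card I))) * B"
      using B0 by (intro mult_right_mono) auto
    ultimately show ?thesis by simp
  qed
qed


lemma uminus: "y \<in> L \<Longrightarrow> \<phi> (- y) = \<phi> y"
proof -
  assume y: "y \<in> L"
  have m1: "-1 \<in> L" using sf_uminus[OF sf sf_1[OF sf]] .
  have "\<phi> (-1) * \<phi> (-1) = 1" using mult[OF m1 m1] one by simp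
  then have "(\<phi> (-1) - 1) * (\<phi> (-1) + 1) = 0" by (simp add: algebra_simps)
  moreover have "\<phi> (-1) + 1 \<noteq> 0" using nonneg[of "-1"] by linarith
  ultimately have "\<phi> (-1) = 1" by simp
  then show ?thesis using mult[OF m1 y] by simp
qed

lemma poly_bounds:
  assumes cL: "\<And>i. coeff p i \<in> L" and x: "x \<in> L" and m: "degree p = m" "m \<ge> 1"
    and R_def: "R = max 1 (\<phi> (of_nat (Suc m))) * (\<Prod>i\<le>m. max 1 (\<phi> (coeff p i)))
                 * max 1 (\<phi> (inverse (coeff p m)))"
  shows "max 1 (\<phi> (poly p x)) \<le> R * max 1 (\<phi> x) ^ m"
    and "max 1 (\<phi> x) ^ m \<le> R ^ (m + 1) * max 1 (\<phi> (poly p x))"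
proof -
  define Lam where "Lam = max 1 (\<phi> (of_nat (Suc m)))"
  define A where "A = (\<Prod>i\<le>m. max 1 (\<phi> (coeff p i)))"
  define W where "W = max 1 (\<phi> (inverse (coeff p m)))"
  define X where "X = max 1 (\<phi> x)"
  define c where "c = coeff p m"
  have R: "R = Lam * A * W" by (simp add: R_def Lam_def A_def W_def)
  have Lam1: "Lam \<ge> 1" and W1: "W \<ge> 1" and X1: "X \<ge> 1" by (auto simp: Lam_def W_def X_def)
  have A1: "A \<ge> 1" unfolding A_def by (intro prod_ge_1) auto
  have Ai: "\<phi> (coeff p i) \<le> A" if "i \<le> m" for i
  proof -
    have "max 1 (\<phi> (coeff p i)) \<le> A"
      unfolding A_def using that by (intro prod_ge_factor) auto
    then show ?thesis by simp
  qed
  have R1: "R \<ge> 1"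
  proof -
    have "1 * 1 \<le> Lam * A" using Lam1 A1 by (intro mult_mono) auto
    then have "1 * 1 \<le> Lam * A * W" using W1 by (intro mult_mono) auto
    then show ?thesis by (simp add: R)
  qed
  have phix: "\<phi> x \<le> X" by (simp add: X_def)
  have termb: "\<phi> (coeff p i * x ^ i) \<le> A * X ^ j" if "i \<le> j" "i \<le> m" for i j
  proof -
    have "\<phi> (coeff p i * x ^ i) = \<phi> (coeff p i) * \<phi> x ^ i"
      by (simp add: mult power cL x sf_power[OF sf])
    also have "\<dots> \<le> A * X ^ j"
    proof (intro mult_mono)
      show "\<phi> x ^ i \<le> X ^ j"
        using power_mono[OF phix nonneg, of i] power_increasing[OF that(1) X1] by linarith
    qed (use Ai[OF that(2)] A1 nonneg in auto)
    finally show ?thesis .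
  qed
  have px: "poly p x = (\<Sum>i\<le>m. coeff p i * x ^ i)" by (simp add: poly_altdef m(1))
  have inL: "coeff p i * x ^ i \<in> L" for i by (intro sf_mult[OF sf] cL sf_power[OF sf] x)
  have "\<phi> (poly p x) \<le> max 1 (\<phi> (of_nat (card {..m}))) * (A * X ^ m)"
    unfolding px using A1 X1 by (intro sum_bound inL termb) auto
  then have "\<phi> (poly p x) \<le> Lam * A * X ^ m" by (simp add: Lam_def mult.assoc)
  also have "\<dots> \<le> R * X ^ m"
  proof -
    have "Lam * A * X ^ m * 1 \<le> Lam * A * X ^ m * W"
      using W1 Lam1 A1 X1 by (intro mult_left_mono) auto
    then show ?thesis by (simp add: R mult_ac)
  qed
  finally have up: "\<phi> (poly p x) \<le> R * X ^ m" .
  have "1 * 1 \<le> R * X ^ m" using R1 one_le_power[OF X1, of m] by (intro mult_mono) auto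
  then have "1 \<le> R * X ^ m" by simp
  with up show "max 1 (\<phi> (poly p x)) \<le> R * max 1 (\<phi> x) ^ m" by (simp add: X_def)
  have p0: "p \<noteq> 0" using m by auto
  have c0: "c \<noteq> 0" using p0 m(1) leading_coeff_neq_0[of p] by (simp add: c_def)
  have cL': "c \<in> L" using cL by (simp add: c_def)
  have Wc: "\<phi> (inverse c) * \<phi> c = 1"
    using inverse[OF cL'] zero_iff[OF cL'] c0 by simp
  have WW: "\<phi> (inverse c) \<le> W" by (simp add: W_def c_def)
  have Rm: "R \<le> R ^ (m + 1)" using power_increasing[of 1 "m + 1" R] R1 by simp
  show "max 1 (\<phi> x) ^ m \<le> R ^ (m + 1) * max 1 (\<phi> (poly p x))"
  proof (cases "X \<le> R")
    case True
    have "X ^ m \<le> R ^ m" using True X1 by (intro power_mono) auto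
    also have "\<dots> \<le> R ^ (m + 1)" using R1 by (intro power_increasing) auto
    also have "\<dots> \<le> R ^ (m + 1) * max 1 (\<phi> (poly p x))"
      using mult_left_mono[of 1 "max 1 (\<phi> (poly p x))" "R ^ (m + 1)"] R1 by simp
    finally show ?thesis by (simp add: X_def)
  next
    case False
    then have XR: "X > R" by simp
    then have Xphi: "\<phi> x = X" using R1 unfolding X_def by (cases "1 \<le> \<phi> x") (auto simp: max_def)
    define z where "z i = (if i = m then poly p x else - (coeff p i * x ^ i))" for i
    have "(\<Sum>i\<le>m. z i) = (\<Sum>i<m. z i) + z m"
      by (simp add: lessThan_Suc_atMost[symmetric])
    also have "(\<Sum>i<m. z i) = - (\<Sum>i<m. coeff p i * x ^ i)"
      by (simp add: z_def sum_negf)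
    also have "poly p x = (\<Sum>i<m. coeff p i * x ^ i) + c * x ^ m"
      unfolding px c_def by (simp add: lessThan_Suc_atMost[symmetric])
    then have "z m = (\<Sum>i<m. coeff p i * x ^ i) + c * x ^ m" by (simp add: z_def)
    finally have zsum: "(\<Sum>i\<le>m. z i) = c * x ^ m" by simp
    define B0 where "B0 = max (\<phi> (poly p x)) (A * X ^ (m - 1))"
    have zL: "z i \<in> L" for i
      by (auto simp: z_def intro: sf_poly[OF sf] cL x sf_uminus[OF sf] inL)
    have zb: "\<phi> (z i) \<le> B0" if "i \<in> {..m}" for i
    proof (cases "i = m")
      case True then show ?thesis by (simp add: z_def B0_def)
    next
      case False
      then have "\<phi> (z i) = \<phi> (coeff p i * x ^ i)" by (simp add: z_def uminus inL)
      also have "\<dots> \<le> A * X ^ (m - 1)" using that False by (intro termb) auto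
      finally show ?thesis by (simp add: B0_def)
    qed
    have B00: "B0 \<ge> 0" using nonneg by (simp add: B0_def le_max_iff_disj)
    have "\<phi> (c * x ^ m) \<le> max 1 (\<phi> (of_nat (card {..m}))) * B0"
      unfolding zsum[symmetric] by (intro sum_bound zL zb B00)
    then have cb: "\<phi> c * X ^ m \<le> Lam * B0"
      by (simp add: Lam_def mult cL' power x sf_power[OF sf] Xphi)
    have XmW: "X ^ m \<le> W * (Lam * B0)"
    proof -
      have "X ^ m = \<phi> (inverse c) * (\<phi> c * X ^ m)" using Wc by (simp add: mult.assoc[symmetric])
      also have "\<dots> \<le> W * (Lam * B0)"
        using W1 X1 nonneg[of c] by (intro mult_mono[OF WW cb]) auto
      finally show ?thesis .
    qed
    have Xm: "X ^ m = X * X ^ (m - 1)" using m(2) by (cases m) auto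
    have Xm0: "X ^ (m - 1) > 0" using X1 by simp
    show ?thesis
    proof (cases "\<phi> (poly p x) \<le> A * X ^ (m - 1)")
      case True
      then have "B0 = A * X ^ (m - 1)" by (simp add: B0_def)
      then have "X * X ^ (m - 1) \<le> R * X ^ (m - 1)" using XmW Xm by (simp add: R mult_ac)
      then have "X \<le> R" using Xm0 by simp
      with XR show ?thesis by simp
    next
      case False
      then have "B0 = \<phi> (poly p x)" by (simp add: B0_def)
      then have "X ^ m \<le> W * Lam * \<phi> (poly p x)" using XmW by (simp add: mult.assoc)
      also have "\<dots> \<le> W * Lam * (A * max 1 (\<phi> (poly p x)))"
      proof (intro mult_left_mono)
        have "1 * \<phi> (poly p x) \<le> A * max 1 (\<phi> (poly p x))"
          using A1 nonneg by (intro mult_mono) auto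
        then show "\<phi> (poly p x) \<le> A * max 1 (\<phi> (poly p x))" by simp
      qed (use W1 Lam1 in auto)
      also have "\<dots> = R * max 1 (\<phi> (poly p x))" by (simp add: R mult_ac)
      also have "\<dots> \<le> R ^ (m + 1) * max 1 (\<phi> (poly p x))"
        using Rm by (intro mult_right_mono) auto
      finally show ?thesis by (simp add: X_def)
    qed
  qed
qed
end


definition Eterm :: "(complex \<Rightarrow> real) \<Rightarrow> complex poly \<Rightarrow> real" where
  "Eterm w p = logplus (w (of_nat (Suc (degree p)))) + (\<Sum>i\<le>degree p. logplus (w (coeff p i)))
     + logplus (w (inverse (coeff p (degree p))))"

lemma Eterm_nonneg: "Eterm w p \<ge> 0"
  unfolding Eterm_def by (intro add_nonneg_nonneg sum_nonneg logplus_nonneg)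

context avL begin

lemma log_bounds:
  assumes cL: "\<And>i. coeff p i \<in> L" and x: "x \<in> L" and m: "degree p \<ge> 1"
  shows "logplus (\<phi> (poly p x)) \<le> real (degree p) * logplus (\<phi> x) + Eterm \<phi> p"
    and "real (degree p) * logplus (\<phi> x) \<le> logplus (\<phi> (poly p x)) + real (Suc (degree p)) * Eterm \<phi> p"
proof -
  define m where "m = degree p"
  define R where "R = max 1 (\<phi> (of_nat (Suc m))) * (\<Prod>i\<le>m. max 1 (\<phi> (coeff p i)))
                 * max 1 (\<phi> (inverse (coeff p m)))"
  have b1: "max 1 (\<phi> (poly p x)) \<le> R * max 1 (\<phi> x) ^ m"
    and b2: "max 1 (\<phi> x) ^ m \<le> R ^ (m + 1) * max 1 (\<phi> (poly p x))"
    using poly_bounds[OF cL x _ _ R_def] m by (auto simp: m_def)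
  have pos: "max 1 t > 0" for t :: real by simp
  have prodpos: "(\<Prod>i\<le>m. max 1 (\<phi> (coeff p i))) > 0" by (intro prod_pos) auto
  have lnA: "ln (\<Prod>i\<le>m. max 1 (\<phi> (coeff p i))) = (\<Sum>i\<le>m. ln (max 1 (\<phi> (coeff p i))))"
    by (rule ln_prod) auto
  have lnR: "ln R = Eterm \<phi> p"
  proof -
    have mx: "max 1 t \<noteq> 0" for t :: real by (simp add: max_def)
    show ?thesis unfolding R_def Eterm_def m_def[symmetric] logplus_eq
      using prodpos mx by (simp add: ln_mult lnA)
  qed
  have R0: "R > 0" unfolding R_def using prodpos by (intro mult_pos_pos) auto
  have "ln (max 1 (\<phi> (poly p x))) \<le> ln (R * max 1 (\<phi> x) ^ m)"
    using b1 R0 by (intro ln_mono) auto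
  also have "\<dots> = ln R + real m * ln (max 1 (\<phi> x))"
    using R0 by (simp add: ln_mult ln_realpow)
  finally show "logplus (\<phi> (poly p x)) \<le> real (degree p) * logplus (\<phi> x) + Eterm \<phi> p"
    unfolding logplus_eq lnR m_def by simp
  have "real m * ln (max 1 (\<phi> x)) = ln (max 1 (\<phi> x) ^ m)" by (simp add: ln_realpow)
  also have "\<dots> \<le> ln (R ^ (m + 1) * max 1 (\<phi> (poly p x)))"
    using b2 by (intro ln_mono) auto
  also have "\<dots> = real (m + 1) * ln R + ln (max 1 (\<phi> (poly p x)))"
  proof -
    have mx: "max 1 (\<phi> (poly p x)) \<noteq> 0" by (simp add: max_def)
    show ?thesis using R0 mx by (simp add: ln_mult ln_realpow algebra_simps)
  qed
  finally show "real (degree p) * logplus (\<phi> x) \<le> logplus (\<phi> (poly p x)) + real (Suc (degree p)) * Eterm \<phi> p"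
    unfolding logplus_eq lnR m_def by simp
qed

end

lemma nf_avL: "number_field L \<Longrightarrow> std_absval \<phi> \<Longrightarrow> avL \<phi> L"
  by unfold_locales (auto simp: number_field_def)

lemma path_ineq_std:
  assumes K: "number_field K"
    and fK: "\<forall>i. coeff f i \<in> K" and gK: "\<forall>i. coeff g i \<in> K"
    and deg: "degree f > degree g" "degree g \<ge> 1"
    and path: "is_path f g P" and alg: "\<forall>n. P n \<in> alg"
    and std: "std_absval \<phi>"
  shows "\<bar>real (degree f) * logplus (\<phi> (P n)) - real (degree g) * logplus (\<phi> (P (Suc n)))\<bar>
          \<le> real (Suc (degree f)) * Eterm \<phi> f + real (Suc (degree g)) * Eterm \<phi> g"
proof -
  obtain L1 where L1: "number_field L1" "K \<subseteq> L1" "P n \<in> L1" using extend_nf[OF K] alg by blast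
  obtain L2 where L2: "number_field L2" "K \<subseteq> L2" "P (Suc n) \<in> L2" using extend_nf[OF K] alg by blast
  interpret a1: avL \<phi> L1 using nf_avL[OF L1(1) std] .
  interpret a2: avL \<phi> L2 using nf_avL[OF L2(1) std] .
  have df: "degree f \<ge> 1" using deg by simp
  have eq: "poly f (P n) = poly g (P (Suc n))" using path by (simp add: is_path_def)
  have f1: "logplus (\<phi> (poly f (P n))) \<le> real (degree f) * logplus (\<phi> (P n)) + Eterm \<phi> f"
    and f2: "real (degree f) * logplus (\<phi> (P n)) \<le> logplus (\<phi> (poly f (P n))) + real (Suc (degree f)) * Eterm \<phi> f"
    using a1.log_bounds[OF _ L1(3) df] fK L1(2) by auto
  have g1: "logplus (\<phi> (poly g (P (Suc n)))) \<le> real (degree g) * logplus (\<phi> (P (Suc n))) + Eterm \<phi> g"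
    and g2: "real (degree g) * logplus (\<phi> (P (Suc n))) \<le> logplus (\<phi> (poly g (P (Suc n)))) + real (Suc (degree g)) * Eterm \<phi> g"
    using a2.log_bounds[OF _ L2(3) deg(2)] gK L2(2) by auto
  have Ef: "Eterm \<phi> f \<ge> 0" and Eg: "Eterm \<phi> g \<ge> 0" by (rule Eterm_nonneg)+
  have "real (Suc (degree f)) * Eterm \<phi> f \<ge> Eterm \<phi> f" using Ef by (simp add: algebra_simps)
  moreover have "real (Suc (degree g)) * Eterm \<phi> g \<ge> Eterm \<phi> g" using Eg by (simp add: algebra_simps)
  ultimately show ?thesis using f1[unfolded eq] f2[unfolded eq] g1 g2 by linarith
qed

lemma logplus_powr:
  assumes "t \<ge> 0" "c \<ge> 0" shows "logplus (t powr c) = c * logplus t"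
proof (cases "t = 0")
  case True then show ?thesis by (simp add: logplus_def)
next
  case False
  then have t: "t > 0" using assms by simp
  show ?thesis
  proof (cases "c = 0")
    case True then show ?thesis using t by (simp add: logplus_def)
  next
    case False
    then have c: "c > 0" using assms by simp
    have "t powr c \<le> 1 \<longleftrightarrow> t \<le> 1" using t c
      by (metis powr_le_cancel_iff powr_one_eq_one powr_le1 less_eq_real_def not_le
          powr_less_mono2 powr_one_gt_zero_iff)
    then show ?thesis using t c by (simp add: logplus_def ln_powr)
  qed
qed

definition Cw :: "complex poly \<Rightarrow> complex poly \<Rightarrow> (complex \<Rightarrow> real) \<Rightarrow> real" where
  "Cw f g w = real (Suc (degree f)) * Eterm w f + real (Suc (degree g)) * Eterm w g"

lemma Cw_nonneg: "Cw f g w \<ge> 0"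
  unfolding Cw_def using Eterm_nonneg by (intro add_nonneg_nonneg mult_nonneg_nonneg) auto

lemma Eterm_scale:
  assumes "\<And>x. \<phi> x \<ge> 0" "c \<ge> 0"
  shows "Eterm (\<lambda>x. \<phi> x powr c) p = c * Eterm \<phi> p"
  unfolding Eterm_def using assms by (simp add: logplus_powr distrib_left sum_distrib_left)

lemma path_ineq:
  assumes K: "number_field K"
    and fK: "\<forall>i. coeff f i \<in> K" and gK: "\<forall>i. coeff g i \<in> K"
    and deg: "degree f > degree g" "degree g \<ge> 1"
    and path: "is_path f g P" and alg: "\<forall>n. P n \<in> alg"
    and v: "v \<in> MKbar K"
  shows "\<bar>real (degree f) * logplus (v (P n)) - real (degree g) * logplus (v (P (Suc n)))\<bar> \<le> Cw f g v"
proof -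
  from v obtain \<phi> where std: "std_absval \<phi>" and v: "v = norm_av K \<phi>" by (auto simp: MKbar_def)
  define c where "c = real (ldeg K \<phi>) / real (deg K)"
  have c0: "c \<ge> 0" by (simp add: c_def)
  have nn: "\<And>x. \<phi> x \<ge> 0" using std_nonneg[OF std] .
  have vv: "v = (\<lambda>x. \<phi> x powr c)" by (simp add: v norm_av_def c_def)
  have "\<bar>real (degree f) * logplus (v (P n)) - real (degree g) * logplus (v (P (Suc n)))\<bar>
      = c * \<bar>real (degree f) * logplus (\<phi> (P n)) - real (degree g) * logplus (\<phi> (P (Suc n)))\<bar>"
  proof -
    have "real (degree f) * logplus (v (P n)) - real (degree g) * logplus (v (P (Suc n)))
        = c * (real (degree f) * logplus (\<phi> (P n)) - real (degree g) * logplus (\<phi> (P (Suc n))))"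
      using c0 nn by (simp add: vv logplus_powr algebra_simps)
    then show ?thesis using c0 by (simp add: abs_mult)
  qed
  also have "\<dots> \<le> c * Cw f g \<phi>"
    unfolding Cw_def using path_ineq_std[OF assms(1-7) std] c0 by (intro mult_left_mono) auto
  also have "\<dots> = Cw f g v"
    unfolding Cw_def vv using Eterm_scale[OF nn c0] by (simp add: algebra_simps)
  finally show ?thesis .
qed


lemma geom_conv:
  fixes a :: "nat \<Rightarrow> real"
  assumes r: "0 \<le> r" "r < 1" and B: "B \<ge> 0" and step: "\<And>n. \<bar>a (Suc n) - a n\<bar> \<le> r ^ n * B"
  shows "convergent a" and "\<And>n. \<bar>lim a - a n\<bar> \<le> r ^ n * (B / (1 - r))"
proof -
  define C where "C = B / (1 - r)"
  have C0: "C \<ge> 0" using B r by (simp add: C_def)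
  have diff: "\<bar>a m - a n\<bar> \<le> (r ^ n - r ^ m) * C" if "n \<le> m" for m n
    using that
  proof (induction m rule: dec_induct)
    case base then show ?case by simp
  next
    case (step m)
    have "\<bar>a (Suc m) - a n\<bar> \<le> \<bar>a (Suc m) - a m\<bar> + \<bar>a m - a n\<bar>" by linarith
    also have "\<dots> \<le> r ^ m * B + (r ^ n - r ^ m) * C" using step.IH assms(4)[of m] by linarith
    also have "r ^ m * B = (r ^ m - r ^ Suc m) * C" using r by (simp add: C_def field_simps)
    finally show ?case by (simp add: algebra_simps)
  qed
  have diff2: "\<bar>a m - a n\<bar> \<le> r ^ n * C" if "n \<le> m" for m n
  proof -
    have "(r ^ n - r ^ m) * C \<le> r ^ n * C" using C0 r by (intro mult_right_mono) auto
    then show ?thesis using diff[OF that] by linarith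
  qed
  have lim0: "(\<lambda>n. r ^ n * C) \<longlonglongrightarrow> 0 * C"
    using r by (intro tendsto_mult LIMSEQ_power_zero tendsto_const) auto
  have "Cauchy a"
  proof (rule metric_CauchyI)
    fix e :: real assume e: "e > 0"
    have "eventually (\<lambda>n. r ^ n * C < e) sequentially"
      using order_tendstoD(2)[OF lim0] e by simp
    then obtain N where N: "\<And>n. n \<ge> N \<Longrightarrow> r ^ n * C < e" by (auto simp: eventually_sequentially)
    have "dist (a m) (a n) < e" if "m \<ge> N" "n \<ge> N" for m n
    proof (cases "n \<le> m")
      case True
      have "r ^ n * C \<le> r ^ N * C" using that r C0 by (intro mult_right_mono power_decreasing) auto
      then show ?thesis using diff2[OF True] N[of N] by (simp add: dist_real_def)
    next
      case False
      have "r ^ m * C \<le> r ^ N * C" using that r C0 by (intro mult_right_mono power_decreasing) auto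
      then show ?thesis using diff2[of m n] False N[of N] by (simp add: dist_real_def abs_minus_commute)
    qed
    then show "\<exists>M. \<forall>m\<ge>M. \<forall>n\<ge>M. dist (a m) (a n) < e" by blast
  qed
  then show conv: "convergent a" by (simp add: Cauchy_convergent_iff)
  fix n
  have "(\<lambda>m. \<bar>a m - a n\<bar>) \<longlonglongrightarrow> \<bar>lim a - a n\<bar>"
    using conv by (intro tendsto_rabs tendsto_diff tendsto_const) (simp add: convergent_LIMSEQ_iff)
  then show "\<bar>lim a - a n\<bar> \<le> r ^ n * (B / (1 - r))"
    unfolding C_def[symmetric] using diff2 by (intro LIMSEQ_le_const2[of _ _ _]) auto
qed

definition Fib :: "(complex \<Rightarrow> real) measure \<Rightarrow> complex set \<Rightarrow> (complex \<Rightarrow> real) \<Rightarrow> (complex \<Rightarrow> real) set" where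
  "Fib M L v = {w \<in> space M. \<forall>x\<in>L. w x = v x}"

locale msetup =
  fixes K :: "complex set" and M :: "(complex \<Rightarrow> real) measure"
  assumes K: "number_field K"
    and space: "space M = MKbar K"
    and fibres: "\<forall>L \<phi>. number_field L \<and> K \<subseteq> L \<and> std_absval \<phi> \<longrightarrow>
        {v \<in> space M. \<forall>x\<in>L. v x = norm_av K \<phi> x} \<in> sets M \<and>
        emeasure M {v \<in> space M. \<forall>x\<in>L. v x = norm_av K \<phi> x} =
          ennreal ((real (ldeg L \<phi>) / real (ldeg K \<phi>)) / (real (deg L) / real (deg K)))"
    and height: "\<forall>\<alpha>\<in>alg. ennreal (weil_height \<alpha>) = (\<integral>\<^sup>+ v. ennreal (logplus (v \<alpha>)) \<partial>M)"
begin

lemma sfK: "subfield K" using K by (simp add: number_field_def)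
lemma Kalg: "K \<subseteq> alg" using K by (simp add: number_field_def)

context
  fixes L assumes L: "number_field L" "K \<subseteq> L"
begin

lemma Fib_sets: "v \<in> space M \<Longrightarrow> Fib M L v \<in> sets M"
proof -
  assume "v \<in> space M"
  then obtain \<phi> where \<phi>: "std_absval \<phi>" "v = norm_av K \<phi>" by (auto simp: space MKbar_def)
  then show ?thesis using fibres L by (simp add: Fib_def)
qed

lemma Fib_measure: "v \<in> space M \<Longrightarrow> emeasure M (Fib M L v) \<ge> ennreal (1 / real (deg L))"
proof -
  assume "v \<in> space M"
  then obtain \<phi> where \<phi>: "std_absval \<phi>" "v = norm_av K \<phi>" by (auto simp: space MKbar_def)
  have em: "emeasure M (Fib M L v) = ennreal ((real (ldeg L \<phi>) / real (ldeg K \<phi>)) / (real (deg L) / real (deg K)))"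
    using \<phi> fibres L by (simp add: Fib_def)
  define a where "a = real (ldeg L \<phi>)"
  define b where "b = real (ldeg K \<phi>)"
  define c where "c = real (deg L)"
  define D where "D = real (deg K)"
  have a1: "a \<ge> 1" using ldeg_ge1[OF L(1)] by (simp add: a_def)
  have b1: "b \<ge> 1" using ldeg_ge1[OF K] by (simp add: b_def)
  have bD: "b \<le> D" using ldeg_le_deg[OF K] by (simp add: b_def D_def)
  have c1: "c \<ge> 1" using deg_ge1[OF L(1)] by (simp add: c_def)
  have "(a / b) / (c / D) = (a * D) / (b * c)" using b1 c1 bD by (simp add: field_simps)
  moreover have "1 / c = b / (b * c)" using b1 by simp
  moreover have "b / (b * c) \<le> (a * D) / (b * c)"
  proof (rule divide_right_mono)
    have "1 * b \<le> a * D" using a1 bD b1 by (intro mult_mono) auto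
    then show "b \<le> a * D" by simp
  qed (use b1 c1 in simp)
  ultimately have "1 / c \<le> (a / b) / (c / D)" by simp
  then show ?thesis unfolding em by (simp add: a_def b_def c_def D_def ennreal_leI)
qed

lemma Fib_self: "v \<in> space M \<Longrightarrow> v \<in> Fib M L v"
  by (simp add: Fib_def)

lemma Fib_eq: "w \<in> Fib M L v \<Longrightarrow> Fib M L w = Fib M L v"
  by (auto simp: Fib_def)

lemma Fib_disj: "w \<in> Fib M L v \<Longrightarrow> w \<in> Fib M L v' \<Longrightarrow> Fib M L v = Fib M L v'"
  using Fib_eq by metis

lemma Fib_const: "w \<in> Fib M L v \<Longrightarrow> x \<in> L \<Longrightarrow> w x = v x"
  by (simp add: Fib_def)


definition Vp :: "nat \<Rightarrow> (complex \<Rightarrow> real) set" where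
  "Vp p = {v \<in> space M. \<exists>\<phi>. std_absval \<phi> \<and> v = norm_av K \<phi> \<and> (p = 0 \<or> prime p)
             \<and> (\<forall>q. \<phi> (of_rat q) = absval_Q p q)}"

lemma space_Vp: "space M = (\<Union>p. Vp p)"
proof
  show "space M \<subseteq> (\<Union>p. Vp p)"
  proof
    fix v assume v: "v \<in> space M"
    then obtain \<phi> where \<phi>: "std_absval \<phi>" "v = norm_av K \<phi>" by (auto simp: space MKbar_def)
    then obtain p where "p = 0 \<or> prime p" "\<forall>q. \<phi> (of_rat q) = absval_Q p q"
      unfolding std_absval_def by blast
    then show "v \<in> (\<Union>p. Vp p)" using v \<phi> by (auto simp: Vp_def)
  qed
qed (auto simp: Vp_def)

lemma Fib_finite_p: "finite (Fib M L ` Vp p)"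
proof (cases "p = 0 \<or> prime p")
  case False then show ?thesis by (simp add: Vp_def)
next
  case True
  define \<beta> :: complex where "\<beta> = (if p = 0 then 2 else inverse (of_nat p))"
  define \<kappa> :: real where "\<kappa> = (if p = 0 then 2 else real p)"
  have \<kappa>1: "\<kappa> > 1" using True using prime_gt_1_nat[of p] by (auto simp: \<kappa>_def)
  have \<beta>K: "\<beta> \<in> K" unfolding \<beta>_def using sf_of_nat[OF sfK, of 2] sf_of_nat[OF sfK, of p]
    by (auto intro: sf_inverse[OF sfK])
  have \<beta>L: "\<beta> \<in> L" using \<beta>K L(2) by auto
  have \<beta>a: "\<beta> \<in> alg" using \<beta>K Kalg by auto
  have phib: "\<phi> \<beta> = \<kappa>" if std: "std_absval \<phi>" and ph: "\<forall>q. \<phi> (of_rat q) = absval_Q p q" for \<phi>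
  proof -
    interpret a: avL \<phi> K using nf_avL[OF K std] .
    show ?thesis
    proof (cases "p = 0")
      case True
      have "\<phi> (of_rat 2) = absval_Q p 2" using ph[rule_format, of 2] by simp
      then show ?thesis using True by (simp add: \<beta>_def \<kappa>_def absval_Q_arch)
    next
      case False
      with \<open>p = 0 \<or> prime p\<close> have pr: "prime p" by simp
      have "\<phi> (of_rat (of_nat p)) = absval_Q p (of_nat p)" using ph by blast
      then have "\<phi> (of_nat p) = inverse (real p)" using absval_Q_self[OF pr] by simp
      then show ?thesis using False a.inverse[OF sf_of_nat[OF sfK, of p]]
        by (simp add: \<beta>_def \<kappa>_def)
    qed
  qed
  define \<delta>1 where "\<delta>1 = ln \<kappa> / real (deg K)"
  define \<delta>2 where "\<delta>2 = 1 / real (deg L)"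
  have dK: "real (deg K) \<ge> 1" using deg_ge1[OF K] by simp
  have dL: "real (deg L) \<ge> 1" using deg_ge1[OF L(1)] by simp
  have d1: "\<delta>1 > 0" using \<kappa>1 dK by (simp add: \<delta>1_def)
  have d2: "\<delta>2 > 0" using dL by (simp add: \<delta>2_def)
  have low: "logplus (v \<beta>) \<ge> \<delta>1" if v: "v \<in> Vp p" for v
  proof -
    from v obtain \<phi> where \<phi>: "std_absval \<phi>" "v = norm_av K \<phi>" "\<forall>q. \<phi> (of_rat q) = absval_Q p q"
      by (auto simp: Vp_def)
    define c where "c = real (ldeg K \<phi>) / real (deg K)"
    have c1: "c \<ge> 1 / real (deg K)" using ldeg_ge1[OF K, of \<phi>] dK
      by (simp add: c_def divide_right_mono)
    have "v \<beta> = \<kappa> powr c" using phib[OF \<phi>(1) \<phi>(3)] by (simp add: \<phi>(2) norm_av_def c_def)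
    moreover have c0: "c \<ge> 0" by (simp add: c_def)
    ultimately have "logplus (v \<beta>) = c * logplus \<kappa>" using logplus_powr[of \<kappa> c] \<kappa>1 by simp
    also have "logplus \<kappa> = ln \<kappa>" using \<kappa>1 by (simp add: logplus_def)
    finally have "logplus (v \<beta>) = c * ln \<kappa>" .
    moreover have "1 / real (deg K) * ln \<kappa> \<le> c * ln \<kappa>"
      using c1 \<kappa>1 by (intro mult_right_mono) auto
    ultimately show ?thesis by (simp add: \<delta>1_def)
  qed
  have VS: "Vp p \<subseteq> space M" by (auto simp: Vp_def)
  have H: "(\<integral>\<^sup>+ w. ennreal (logplus (w \<beta>)) \<partial>M) = ennreal (max 0 (weil_height \<beta>))"
  proof -
    have "ennreal (max 0 (weil_height \<beta>)) = ennreal (weil_height \<beta>)"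
      by (cases "weil_height \<beta> \<ge> 0") (auto simp: max_def ennreal_neg)
    then show ?thesis using height \<beta>a by simp
  qed
  have bound: "card S \<le> nat \<lceil>max 0 (weil_height \<beta>) / (\<delta>1 * \<delta>2)\<rceil>"
    if S: "S \<subseteq> Fib M L ` Vp p" "finite S" for S
  proof -
    have Ssets: "F \<in> sets M" if "F \<in> S" for F using S that VS Fib_sets by blast
    have pw: "(\<Sum>F\<in>S. ennreal \<delta>1 * indicator F w) \<le> ennreal (logplus (w \<beta>))"
      if w: "w \<in> space M" for w
    proof (cases "\<exists>F0\<in>S. w \<in> F0")
      case True
      then obtain F0 where F0: "F0 \<in> S" "w \<in> F0" by blast
      obtain v0 where v0: "v0 \<in> Vp p" "F0 = Fib M L v0" using F0 S by blast
      have other: "w \<notin> F" if FS: "F \<in> S - {F0}" for F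
      proof
        assume wF: "w \<in> F"
        obtain v1 where v1: "F = Fib M L v1" using FS S by blast
        have "F0 = F" using Fib_disj[of w v0 v1] F0 wF v0 v1 by simp
        with FS show False by simp
      qed
      have "(\<Sum>F\<in>S. ennreal \<delta>1 * indicator F w)
          = ennreal \<delta>1 * indicator F0 w + (\<Sum>F\<in>S - {F0}. ennreal \<delta>1 * indicator F w)"
        by (rule sum.remove[OF S(2) F0(1)])
      also have "(\<Sum>F\<in>S - {F0}. ennreal \<delta>1 * indicator F w) = 0"
        using other by (intro sum.neutral) auto
      finally have "(\<Sum>F\<in>S. ennreal \<delta>1 * indicator F w) = ennreal \<delta>1" using F0 by simp
      moreover have "w \<beta> = v0 \<beta>" using Fib_const[of w v0 \<beta>] F0 v0 \<beta>L by simp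
      ultimately show ?thesis using low[OF v0(1)] by (simp add: ennreal_leI)
    next
      case False
      then have "(\<Sum>F\<in>S. ennreal \<delta>1 * indicator F w) = 0" by (intro sum.neutral) auto
      then show ?thesis by simp
    qed
    have "ennreal (real (card S) * (\<delta>1 * \<delta>2)) = (\<Sum>F\<in>S. ennreal (\<delta>1 * \<delta>2))"
      using d1 d2 by (simp add: ennreal_mult' ennreal_of_nat_eq_real_of_nat)
    also have "\<dots> \<le> (\<Sum>F\<in>S. ennreal \<delta>1 * emeasure M F)"
    proof (intro sum_mono)
      fix F assume "F \<in> S"
      then obtain v where v: "v \<in> Vp p" "F = Fib M L v" using S by blast
      have "ennreal \<delta>2 \<le> emeasure M F" using Fib_measure[of v] v VS by (auto simp: \<delta>2_def)
      then show "ennreal (\<delta>1 * \<delta>2) \<le> ennreal \<delta>1 * emeasure M F"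
        using d1 d2 by (simp add: ennreal_mult mult_left_mono)
    qed
    also have "\<dots> = (\<integral>\<^sup>+ w. (\<Sum>F\<in>S. ennreal \<delta>1 * indicator F w) \<partial>M)"
      using Ssets by (subst nn_integral_sum) (auto simp: nn_integral_cmult_indicator)
    also have "\<dots> \<le> (\<integral>\<^sup>+ w. ennreal (logplus (w \<beta>)) \<partial>M)"
      by (intro nn_integral_mono pw)
    also have "\<dots> = ennreal (max 0 (weil_height \<beta>))" by (rule H)
    finally have "real (card S) * (\<delta>1 * \<delta>2) \<le> max 0 (weil_height \<beta>)"
      by (subst (asm) ennreal_le_iff) auto
    then have "real (card S) \<le> max 0 (weil_height \<beta>) / (\<delta>1 * \<delta>2)"
      using d1 d2 by (simp add: field_simps)
    then show ?thesis by linarith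
  qed
  show ?thesis using finite_if_finite_subsets_card_bdd[OF bound] by blast
qed

lemma Fib_countable: "countable (Fib M L ` space M)"
proof -
  have "Fib M L ` space M = (\<Union>p. Fib M L ` Vp p)" using space_Vp by auto
  then show ?thesis using Fib_finite_p by (simp add: countable_finite)
qed

lemma meas_L: assumes a: "\<alpha> \<in> L" shows "(\<lambda>v. v \<alpha>) \<in> borel_measurable M"
proof (rule measurableI)
  fix A :: "real set" assume "A \<in> sets borel"
  have eq: "(\<lambda>v. v \<alpha>) -` A \<inter> space M = \<Union>{F \<in> Fib M L ` space M. \<exists>w\<in>F. w \<alpha> \<in> A}"
  proof
    show "(\<lambda>v. v \<alpha>) -` A \<inter> space M \<subseteq> \<Union>{F \<in> Fib M L ` space M. \<exists>w\<in>F. w \<alpha> \<in> A}"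
      using Fib_self by blast
    show "\<Union>{F \<in> Fib M L ` space M. \<exists>w\<in>F. w \<alpha> \<in> A} \<subseteq> (\<lambda>v. v \<alpha>) -` A \<inter> space M"
    proof
      fix u assume "u \<in> \<Union>{F \<in> Fib M L ` space M. \<exists>w\<in>F. w \<alpha> \<in> A}"
      then obtain v w where vw: "v \<in> space M" "u \<in> Fib M L v" "w \<in> Fib M L v" "w \<alpha> \<in> A" by blast
      have "u \<alpha> = w \<alpha>" using Fib_const[OF vw(2) a] Fib_const[OF vw(3) a] by simp
      moreover have "u \<in> space M" using vw(2) by (simp add: Fib_def)
      ultimately show "u \<in> (\<lambda>v. v \<alpha>) -` A \<inter> space M" using vw by simp
    qed
  qed
  have "countable {F \<in> Fib M L ` space M. \<exists>w\<in>F. w \<alpha> \<in> A}"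
    using Fib_countable by (rule countable_subset[rotated]) auto
  moreover have "{F \<in> Fib M L ` space M. \<exists>w\<in>F. w \<alpha> \<in> A} \<subseteq> sets M" using Fib_sets by auto
  ultimately show "(\<lambda>v. v \<alpha>) -` A \<inter> space M \<in> sets M" unfolding eq by (rule sets.countable_Union)
qed auto
end

lemma meas_alg: assumes "\<alpha> \<in> alg" shows "(\<lambda>v. v \<alpha>) \<in> borel_measurable M"
  using extend_nf[OF K assms] meas_L by blast

end


lemma pp_shift: "path_proj ((shift ^^ n) P) = P n"
proof -
  have "(shift ^^ n) P = (\<lambda>k. P (k + n))"
    by (induction n) (auto simp: shift_def)
  then show ?thesis by (simp add: path_proj_def)
qed

lemma weil_height_nonneg: "weil_height \<alpha> \<ge> 0"
  unfolding weil_height_def Let_def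
  by (intro divide_nonneg_nonneg infsum_nonneg mult_nonneg_nonneg logplus_nonneg) auto

context msetup begin

lemma meas_lp: "\<beta> \<in> alg \<Longrightarrow> (\<lambda>v. logplus (v \<beta>)) \<in> borel_measurable M"
  unfolding logplus_eq by (intro borel_measurable_ln borel_measurable_max borel_measurable_const meas_alg)

lemma int_lp: assumes b: "\<beta> \<in> alg" shows "integrable M (\<lambda>v. logplus (v \<beta>))"
proof (rule integrableI_nonneg)
  show "(\<lambda>v. logplus (v \<beta>)) \<in> borel_measurable M" by (rule meas_lp[OF b])
  show "AE x in M. 0 \<le> logplus (x \<beta>)" by (simp add: logplus_nonneg)
  have "(\<integral>\<^sup>+ x. ennreal (logplus (x \<beta>)) \<partial>M) = ennreal (weil_height \<beta>)" using height b by simp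
  then show "(\<integral>\<^sup>+ x. ennreal (logplus (x \<beta>)) \<partial>M) < \<infinity>" by simp
qed

lemma integral_lp: assumes b: "\<beta> \<in> alg" shows "(\<integral> v. logplus (v \<beta>) \<partial>M) = weil_height \<beta>"
proof -
  have "ennreal (\<integral> v. logplus (v \<beta>) \<partial>M) = (\<integral>\<^sup>+ v. ennreal (logplus (v \<beta>)) \<partial>M)"
    by (rule nn_integral_eq_integral[symmetric]) (auto simp: int_lp[OF b] logplus_nonneg)
  also have "\<dots> = ennreal (weil_height \<beta>)" using height b by simp
  finally have e: "ennreal (\<integral> v. logplus (v \<beta>) \<partial>M) = ennreal (weil_height \<beta>)" .
  have i0: "0 \<le> (\<integral> v. logplus (v \<beta>) \<partial>M)" by (intro integral_nonneg_AE) (simp add: logplus_nonneg)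
  show ?thesis using e ennreal_inj[OF i0 weil_height_nonneg] by blast
qed

lemma int_Eterm: assumes p: "\<forall>i. coeff p i \<in> K" shows "integrable M (\<lambda>v. Eterm v p)"
proof -
  have cK: "coeff p i \<in> alg" for i using p Kalg by auto
  have nK: "of_nat n \<in> alg" for n using sf_of_nat[OF sfK] Kalg by auto
  have iK: "inverse (coeff p (degree p)) \<in> alg" using sf_inverse[OF sfK] p Kalg by auto
  have 1: "integrable M (\<lambda>v. logplus (v (of_nat (Suc (degree p)))))" by (rule int_lp[OF nK])
  have 2: "integrable M (\<lambda>v. \<Sum>i\<le>degree p. logplus (v (coeff p i)))"
    by (rule Bochner_Integration.integrable_sum[where f="\<lambda>i v. logplus (v (coeff p i))"]) (rule int_lp[OF cK])
  have 3: "integrable M (\<lambda>v. logplus (v (inverse (coeff p (degree p)))))" by (rule int_lp[OF iK])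
  have "integrable M (\<lambda>v. logplus (v (of_nat (Suc (degree p)))) + (\<Sum>i\<le>degree p. logplus (v (coeff p i)))
     + logplus (v (inverse (coeff p (degree p)))))"
    by (rule Bochner_Integration.integrable_add[OF Bochner_Integration.integrable_add[OF 1 2] 3])
  then show ?thesis by (simp only: Eterm_def)
qed

lemma meas_Eterm: assumes p: "\<forall>i. coeff p i \<in> K" shows "(\<lambda>v. Eterm v p) \<in> borel_measurable M"
  using int_Eterm[OF p] by (rule borel_measurable_integrable)

end


theorem proposition4p2:
  fixes K :: "complex set" and f g :: "complex poly" and P :: "nat \<Rightarrow> complex"
    and M :: "(complex \<Rightarrow> real) measure"
  assumes K: "number_field K"
    and fK: "\<forall>i. coeff f i \<in> K" and gK: "\<forall>i. coeff g i \<in> K"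
    and deg: "degree f > degree g" "degree g \<ge> 1"
    and path: "is_path f g P" and alg: "\<forall>n. P n \<in> alg"
    and space: "space M = MKbar K"
    and fibres: "\<forall>L \<phi>. number_field L \<and> K \<subseteq> L \<and> std_absval \<phi> \<longrightarrow>
        {v \<in> space M. \<forall>x\<in>L. v x = norm_av K \<phi> x} \<in> sets M \<and>
        emeasure M {v \<in> space M. \<forall>x\<in>L. v x = norm_av K \<phi> x} =
          ennreal ((real (ldeg L \<phi>) / real (ldeg K \<phi>)) / (real (deg L) / real (deg K)))"
    and height: "\<forall>\<alpha>\<in>alg. ennreal (weil_height \<alpha>) = (\<integral>\<^sup>+ v. ennreal (logplus (v \<alpha>)) \<partial>M)"
  shows "GC f g P \<in> borel_measurable M
    \<and> convergent (\<lambda>n. (real (degree g) / real (degree f)) ^ n * weil_height (path_proj ((shift ^^ n) P)))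
    \<and> ennreal (lim (\<lambda>n. (real (degree g) / real (degree f)) ^ n * weil_height (path_proj ((shift ^^ n) P))))
        = (\<integral>\<^sup>+ v. ennreal (GC f g P v) \<partial>M)"
proof -
  interpret msetup K M using K space fibres height by unfold_locales
  define d where "d = real (degree f)"
  define e where "e = real (degree g)"
  define r where "r = e / d"
  have e1: "e \<ge> 1" using deg by (simp add: e_def)
  have de: "d > e" using deg by (simp add: d_def e_def)
  have d0: "d > 0" using e1 de by simp
  have r0: "0 \<le> r" and r1: "r < 1" using e1 de d0 by (auto simp: r_def field_simps)
  define a where "a v n = r ^ n * logplus (v (P n))" for v :: "complex \<Rightarrow> real" and n
  have GCa: "GC f g P v = lim (a v)" for v
  proof -
    have "a v = (\<lambda>n. (real (degree g) / real (degree f)) ^ n * logplus (v (P n)))"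
      by (rule ext) (simp add: a_def d_def e_def r_def)
    then show ?thesis by (simp add: GC_def pp_shift)
  qed
  define D where "D = 1 / d / (1 - r)"
  have D0: "D \<ge> 0" using d0 r1 by (simp add: D_def)
  define Q where "Q v = Cw f g v * D" for v
  have Q0: "Q v \<ge> 0" for v using Cw_nonneg D0 by (simp add: Q_def)
  have step: "\<bar>a v (Suc n) - a v n\<bar> \<le> r ^ n * (Cw f g v / d)" if v: "v \<in> space M" for v n
  proof -
    have pi: "\<bar>d * logplus (v (P n)) - e * logplus (v (P (Suc n)))\<bar> \<le> Cw f g v"
      using path_ineq[OF K fK gK deg path alg, of v n] v space by (simp add: d_def e_def)
    have "a v (Suc n) - a v n = r ^ n * ((e * logplus (v (P (Suc n))) - d * logplus (v (P n))) / d)"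
      using d0 by (simp add: a_def r_def field_simps)
    then have "\<bar>a v (Suc n) - a v n\<bar> = r ^ n * (\<bar>d * logplus (v (P n)) - e * logplus (v (P (Suc n)))\<bar> / d)"
      using r0 d0 by (simp add: abs_mult abs_minus_commute)
    also have "\<dots> \<le> r ^ n * (Cw f g v / d)"
      using pi d0 r0 by (intro mult_left_mono divide_right_mono) auto
    finally show ?thesis .
  qed
  have conv: "convergent (a v)" and bnd: "\<And>n. \<bar>GC f g P v - a v n\<bar> \<le> r ^ n * Q v"
    if v: "v \<in> space M" for v
  proof -
    have B0: "Cw f g v / d \<ge> 0" using Cw_nonneg d0 by simp
    show "convergent (a v)" using geom_conv(1)[OF r0 r1 B0 step[OF v]] .
    fix n
    have "Cw f g v / d / (1 - r) = Q v" by (simp add: Q_def D_def)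
    then show "\<bar>GC f g P v - a v n\<bar> \<le> r ^ n * Q v"
      using geom_conv(2)[OF r0 r1 B0 step[OF v], of n] by (simp add: GCa)
  qed
  have a0: "a v n \<ge> 0" for v n using r0 by (simp add: a_def logplus_nonneg)
  have Pa: "P n \<in> alg" for n using alg by simp
  have ma: "(\<lambda>v. a v n) \<in> borel_measurable M" for n
    unfolding a_def by (intro borel_measurable_times borel_measurable_const meas_lp Pa)
  have mG: "GC f g P \<in> borel_measurable M"
  proof (rule borel_measurable_LIMSEQ_real[where u = "\<lambda>n v. a v n"])
    fix v assume "v \<in> space M"
    then have "a v \<longlonglongrightarrow> lim (a v)" using conv by (simp add: convergent_LIMSEQ_iff)
    then show "(\<lambda>n. a v n) \<longlonglongrightarrow> GC f g P v" by (simp add: GCa)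
  qed (rule ma)
  have ia: "integrable M (\<lambda>v. a v n)" for n
    unfolding a_def by (intro integrable_mult_right int_lp Pa)
  have iQ: "integrable M Q"
  proof -
    have "integrable M (\<lambda>v. (real (Suc (degree f)) * Eterm v f + real (Suc (degree g)) * Eterm v g) * D)"
      by (intro integrable_mult_left Bochner_Integration.integrable_add integrable_mult_right int_Eterm fK gK)
    moreover have "Q = (\<lambda>v. (real (Suc (degree f)) * Eterm v f + real (Suc (degree g)) * Eterm v g) * D)"
      by (rule ext) (simp only: Q_def Cw_def)
    ultimately show ?thesis by (simp only:)
  qed
  have GC0: "GC f g P v \<ge> 0" if "v \<in> space M" for v
  proof -
    have "a v \<longlonglongrightarrow> lim (a v)" using conv[OF that] by (simp add: convergent_LIMSEQ_iff)
    then have "0 \<le> lim (a v)" using a0 by (intro LIMSEQ_le_const[of "a v"]) auto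
    then show ?thesis by (simp add: GCa)
  qed
  have iG: "integrable M (GC f g P)"
  proof (rule Bochner_Integration.integrable_bound[OF _ mG])
    show "integrable M (\<lambda>v. a v 0 + Q v)" by (intro Bochner_Integration.integrable_add ia iQ)
    show "AE v in M. norm (GC f g P v) \<le> norm (a v 0 + Q v)"
    proof (rule AE_I2)
      fix v assume v: "v \<in> space M"
      have "\<bar>GC f g P v - a v 0\<bar> \<le> Q v" using bnd[OF v, of 0] by simp
      then show "norm (GC f g P v) \<le> norm (a v 0 + Q v)" using a0[of v 0] Q0[of v] GC0[OF v] by simp
    qed
  qed
  define I where "I = (\<integral> v. GC f g P v \<partial>M)"
  define hn where "hn n = (real (degree g) / real (degree f)) ^ n * weil_height (path_proj ((shift ^^ n) P))" for n
  have hn: "hn n = (\<integral> v. a v n \<partial>M)" for n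
    unfolding hn_def a_def using integral_lp[OF Pa, of n] by (simp add: pp_shift r_def d_def e_def)
  have close: "\<bar>hn n - I\<bar> \<le> r ^ n * (\<integral> v. Q v \<partial>M)" for n
  proof -
    have bnd2: "- (r ^ n * Q v) \<le> GC f g P v - a v n \<and> GC f g P v - a v n \<le> r ^ n * Q v"
      if "v \<in> space M" for v using bnd[OF that, of n] by linarith
    have eq: "I - hn n = (\<integral> v. GC f g P v - a v n \<partial>M)"
      unfolding I_def hn using iG ia by simp
    have up: "(\<integral> v. GC f g P v - a v n \<partial>M) \<le> (\<integral> v. r ^ n * Q v \<partial>M)"
      using bnd2 by (intro integral_mono Bochner_Integration.integrable_diff iG ia integrable_mult_right iQ)
        auto
    have lo: "(\<integral> v. - (r ^ n * Q v) \<partial>M) \<le> (\<integral> v. GC f g P v - a v n \<partial>M)"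
      using bnd2 by (intro integral_mono Bochner_Integration.integrable_diff iG ia integrable_minus
          integrable_mult_right iQ) auto
    have "(\<integral> v. r ^ n * Q v \<partial>M) = r ^ n * (\<integral> v. Q v \<partial>M)" by simp
    moreover have "(\<integral> v. - (r ^ n * Q v) \<partial>M) = - (r ^ n * (\<integral> v. Q v \<partial>M))" by simp
    ultimately show ?thesis using eq up lo by linarith
  qed
  have lim0: "(\<lambda>n. r ^ n * (\<integral> v. Q v \<partial>M)) \<longlonglongrightarrow> 0 * (\<integral> v. Q v \<partial>M)"
    using r0 r1 by (intro tendsto_mult LIMSEQ_power_zero tendsto_const) auto
  have "(\<lambda>n. hn n - I) \<longlonglongrightarrow> 0"
    by (rule Lim_null_comparison[OF _ lim0[simplified]]) (use close in auto)
  then have "(\<lambda>n. hn n - I + I) \<longlonglongrightarrow> 0 + I" by (intro tendsto_add tendsto_const)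
  then have hnI: "hn \<longlonglongrightarrow> I" by simp
  have "ennreal I = (\<integral>\<^sup>+ v. ennreal (GC f g P v) \<partial>M)"
    unfolding I_def using GC0 by (intro nn_integral_eq_integral[symmetric] iG AE_I2) auto
  moreover have "convergent hn" using hnI by (rule convergentI)
  moreover have "lim hn = I" using hnI by (rule limI)
  ultimately show ?thesis using mG unfolding hn_def by simp
qed


end
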